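(* Let $n \ge m \ge 2$ with $n$ odd, and let $K_{n,m}$ be the complete bipartite graph with bipartition $(X,Y)$, $|X|=n$, $|Y|=m$. If $U$ is a strong edge geodetic set of $K_{n,m}$ with $X \subseteq U$, then $|U| \ge \frac{2n}{n+1} + m$.
   Context: All graphs are finite, simple and connected. A set $S \subseteq V(G)$ is a strong edge geodetic set of $G$ if one can assign to every unordered pair $\{u,v\}$ of distinct vertices of $S$ either one shortest $u,v$-path $P_{uv}$ in $G$ or no path, in such a way that every edge of $G$ lies on at least one of the assigned paths. *)

theory Defs
  imports Complex_Main
begin

text \<open>Simple graphs are given by a vertex set V and a symmetric irreflexive
  adjacency relation E (with E only relating vertices of V).
  Paths are lists of vertices.\<close>

definition walk :: "('a \<Rightarrow> 'a \<Rightarrow> bool) \<Rightarrow> 'a list \<Rightarrow> bool" where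
  "walk E p \<longleftrightarrow> p \<noteq> [] \<and> (\<forall>i. Suc i < length p \<longrightarrow> E (p ! i) (p ! Suc i))"

definition gdist :: "('a \<Rightarrow> 'a \<Rightarrow> bool) \<Rightarrow> 'a \<Rightarrow> 'a \<Rightarrow> nat" where
  "gdist E u v = (LEAST k. \<exists>p. walk E p \<and> hd p = u \<and> last p = v \<and> length p = Suc k)"

definition shortest_path :: "('a \<Rightarrow> 'a \<Rightarrow> bool) \<Rightarrow> 'a \<Rightarrow> 'a \<Rightarrow> 'a list \<Rightarrow> bool" where
  "shortest_path E u v p \<longleftrightarrow> walk E p \<and> hd p = u \<and> last p = v \<and> length p = Suc (gdist E u v)"

definition path_edges :: "'a list \<Rightarrow> 'a set set" where
  "path_edges p = {{p ! i, p ! Suc i} | i. Suc i < length p}"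

text \<open>Strong edge geodetic set: an assignment P of at most one shortest path
  to each unordered pair {u,v} of distinct vertices of S, covering every edge.\<close>
definition strong_edge_geodetic :: "'a set \<Rightarrow> ('a \<Rightarrow> 'a \<Rightarrow> bool) \<Rightarrow> 'a set \<Rightarrow> bool" where
  "strong_edge_geodetic V E S \<longleftrightarrow> S \<subseteq> V \<and>
     (\<exists>P :: 'a set \<Rightarrow> 'a list option.
        (\<forall>u\<in>S. \<forall>v\<in>S. u \<noteq> v \<longrightarrow>
            (case P {u, v} of None \<Rightarrow> True
             | Some p \<Rightarrow> shortest_path E u v p \<or> shortest_path E v u p)) \<and>
        (\<forall>x\<in>V. \<forall>y\<in>V. E x y \<longrightarrow>
            (\<exists>u\<in>S. \<exists>v\<in>S. u \<noteq> v \<and> (\<exists>p. P {u, v} = Some p \<and> {x, y} \<in> path_edges p))))"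

definition complete_bipartite :: "'a set \<Rightarrow> 'a set \<Rightarrow> 'a \<Rightarrow> 'a \<Rightarrow> bool" where
  "complete_bipartite X Y x y \<longleftrightarrow> (x \<in> X \<and> y \<in> Y) \<or> (x \<in> Y \<and> y \<in> X)"

end

theory Submission
  imports Defs
begin

lemma gdist_le_walk:
  assumes "walk E p" "hd p = u" "last p = v"
  shows "gdist E u v \<le> length p - 1"
proof -
  have "p \<noteq> []" using assms(1) by (simp add: walk_def)
  hence "Suc (length p - 1) = length p" by simp
  hence "\<exists>q. walk E q \<and> hd q = u \<and> last q = v \<and> length q = Suc (length p - 1)"
    using assms by metis
  thus ?thesis unfolding gdist_def by (rule Least_le)
qed

lemma walk3: "E u w \<Longrightarrow> E w v \<Longrightarrow> walk E [u,w,v]"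
  unfolding walk_def
proof (intro conjI allI impI)
  fix i assume "E u w" "E w v" "Suc i < length [u,w,v]"
  hence "i = 0 \<or> i = 1" by auto
  thus "E ([u, w, v] ! i) ([u, w, v] ! Suc i)" using \<open>E u w\<close> \<open>E w v\<close> by auto
qed simp

lemma walk2: "E u v \<Longrightarrow> walk E [u,v]"
  unfolding walk_def
proof (intro conjI allI impI)
  fix i assume "E u v" "Suc i < length [u,v]"
  hence "i = 0" by auto
  thus "E ([u, v] ! i) ([u, v] ! Suc i)" using \<open>E u v\<close> by auto
qed simp

lemma gdist_le2:
  assumes "X \<noteq> {}" "Y \<noteq> {}" "u \<in> X \<union> Y" "v \<in> X \<union> Y"
  shows "gdist (complete_bipartite X Y) u v \<le> 2"
proof -
  obtain x0 where x0: "x0 \<in> X" using assms by auto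
  obtain y0 where y0: "y0 \<in> Y" using assms by auto
  let ?E = "complete_bipartite X Y"
  have "\<exists>p. walk ?E p \<and> hd p = u \<and> last p = v \<and> length p \<le> 3"
  proof (cases "u \<in> X")
    case True
    show ?thesis
    proof (cases "v \<in> X")
      case True
      hence "walk ?E [u,y0,v]" using \<open>u \<in> X\<close> y0 by (intro walk3) (auto simp: complete_bipartite_def)
      then show ?thesis by (intro exI[of _ "[u,y0,v]"]) simp
    next
      case False
      hence "v \<in> Y" using assms(4) by simp
      hence "walk ?E [u,v]" using \<open>u \<in> X\<close> by (intro walk2) (auto simp: complete_bipartite_def)
      then show ?thesis by (intro exI[of _ "[u,v]"]) simp
    qed
  next
    case False
    hence u: "u \<in> Y" using assms(3) by simp
    show ?thesis
    proof (cases "v \<in> X")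
      case True
      hence "walk ?E [u,v]" using u by (intro walk2) (auto simp: complete_bipartite_def)
      then show ?thesis by (intro exI[of _ "[u,v]"]) simp
    next
      case False
      hence "v \<in> Y" using assms(4) by simp
      hence "walk ?E [u,x0,v]" using u x0 by (intro walk3) (auto simp: complete_bipartite_def)
      then show ?thesis by (intro exI[of _ "[u,x0,v]"]) simp
    qed
  qed
  then obtain p where "walk ?E p" "hd p = u" "last p = v" "length p \<le> 3" by blast
  from gdist_le_walk[OF this(1-3)] this(4) show ?thesis by simp
qed

lemma edge_idx:
  assumes "{x,y} \<in> path_edges p"
  shows "\<exists>i. Suc i < length p \<and> {x,y} = {p!i, p!Suc i}"
  using assms unfolding path_edges_def by auto

lemma key:
  assumes E: "E = complete_bipartite X Y" and disj: "X \<inter> Y = {}"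
    and w: "walk E p" and len: "length p \<le> 3"
    and hu: "hd p \<in> U" and lu: "last p \<in> U"
    and y: "y \<notin> U" "y \<in> Y" and x: "x \<in> X"
    and e: "{x,y} \<in> path_edges p"
  shows "p ! 1 = y \<and> (x = hd p \<or> x = last p) \<and> hd p \<in> X \<and> last p \<in> X"
proof -
  obtain i where i: "Suc i < length p" "{x,y} = {p!i, p!Suc i}"
    using edge_idx[OF e] by blast
  have hd0: "hd p = p!0" using i by (cases p) auto
  have ne: "p \<noteq> []" using i by auto
  have "length p = 2 \<or> length p = 3" using i len by auto
  thus ?thesis
  proof
    assume l2: "length p = 2"
    hence "i = 0" using i by auto
    moreover have "last p = p!1" using l2 ne by (simp add: last_conv_nth)
    ultimately show ?thesis using i hd0 hu lu y x by (auto simp: doubleton_eq_iff)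
  next
    assume l3: "length p = 3"
    have lp: "last p = p!2" using l3 ne by (simp add: last_conv_nth)
    have xy: "x \<noteq> y" using x y disj by auto
    have y1: "p!1 = y"
    proof -
      have "i = 0 \<or> i = 1" using i l3 by auto
      thus ?thesis using i hd0 lp hu lu y by (auto simp: doubleton_eq_iff numeral_2_eq_2)
    qed
    have W: "\<And>i. Suc i < 3 \<Longrightarrow> E (p!i) (p!Suc i)" using w l3 unfolding walk_def by auto
    have "E (p!0) (p!1)" "E (p!1) (p!2)" using W[of 0] W[of 1] by (auto simp: numeral_2_eq_2)
    hence "p!0 \<in> X" "p!2 \<in> X" using y1 y disj E unfolding complete_bipartite_def by auto
    moreover have "x = p!0 \<or> x = p!2"
    proof -
      have "i = 0 \<or> i = 1" using i l3 by auto
      thus ?thesis using i y1 xy by (auto simp: doubleton_eq_iff numeral_2_eq_2)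
    qed
    ultimately show ?thesis using y1 hd0 lp by auto
  qed
qed

theorem mainTheorem5:
  fixes X Y U :: "'a set" and n m :: nat
  assumes "finite X" and "finite Y" and "X \<inter> Y = {}"
    and "card X = n" and "card Y = m"
    and "m \<ge> 2" and "n \<ge> m" and "odd n"
    and "strong_edge_geodetic (X \<union> Y) (complete_bipartite X Y) U"
    and "X \<subseteq> U"
  shows "real (card U) \<ge> 2 * real n / (real n + 1) + real m"
proof -
  let ?E = "complete_bipartite X Y"
  have UV: "U \<subseteq> X \<union> Y" using assms(9) unfolding strong_edge_geodetic_def by blast
  obtain P :: "'a set \<Rightarrow> 'a list option" where
    P1: "\<forall>u\<in>U. \<forall>v\<in>U. u \<noteq> v \<longrightarrow>
            (case P {u, v} of None \<Rightarrow> True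
             | Some p \<Rightarrow> shortest_path ?E u v p \<or> shortest_path ?E v u p)" and
    P2: "\<forall>x\<in>X \<union> Y. \<forall>y\<in>X \<union> Y. ?E x y \<longrightarrow>
            (\<exists>u\<in>U. \<exists>v\<in>U. u \<noteq> v \<and> (\<exists>p. P {u, v} = Some p \<and> {x, y} \<in> path_edges p))"
    using assms(9) unfolding strong_edge_geodetic_def by blast
  have Xne: "X \<noteq> {}" and Yne: "Y \<noteq> {}" using assms(4-7) by auto
  define Y' where "Y' = Y - U"
  define g where "g = (\<lambda>y x. SOME q. \<exists>u v p. q = {u,v} \<and> u \<in> U \<and> v \<in> U \<and> u \<noteq> v
        \<and> P q = Some p \<and> {x,y} \<in> path_edges p)"
  have gprop: "g y x \<subseteq> X \<and> card (g y x) = 2 \<and> x \<in> g y x \<and> (\<exists>p. P (g y x) = Some p \<and> p ! 1 = y)"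
    if y: "y \<in> Y'" and x: "x \<in> X" for x y
  proof -
    have "?E x y" using x y unfolding Y'_def complete_bipartite_def by auto
    moreover have "x \<in> X \<union> Y" "y \<in> X \<union> Y" using x y unfolding Y'_def by auto
    ultimately obtain u0 v0 p0 where uvp: "u0 \<in> U" "v0 \<in> U" "u0 \<noteq> v0" "P {u0, v0} = Some p0"
       "{x, y} \<in> path_edges p0"
      using P2 by metis
    hence "\<exists>q. \<exists>u v p. q = {u,v} \<and> u \<in> U \<and> v \<in> U \<and> u \<noteq> v
        \<and> P q = Some p \<and> {x,y} \<in> path_edges p"
      by blast
    hence "\<exists>u v p. g y x = {u,v} \<and> u \<in> U \<and> v \<in> U \<and> u \<noteq> v
        \<and> P (g y x) = Some p \<and> {x,y} \<in> path_edges p"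
      unfolding g_def by (rule someI_ex)
    then obtain u v p where q: "g y x = {u,v}" "u \<in> U" "v \<in> U" "u \<noteq> v"
        "P (g y x) = Some p" "{x,y} \<in> path_edges p" by blast
    have "P {u,v} = Some p" using q by simp
    moreover have "case P {u, v} of None \<Rightarrow> True
             | Some p \<Rightarrow> shortest_path ?E u v p \<or> shortest_path ?E v u p"
      using P1 q(2,3,4) by blast
    ultimately have sp: "shortest_path ?E u v p \<or> shortest_path ?E v u p" by simp
    have uv: "u \<in> X \<union> Y" "v \<in> X \<union> Y" using q UV by auto
    have "p ! 1 = y \<and> (x = u \<or> x = v) \<and> u \<in> X \<and> v \<in> X"
      using sp
    proof
      assume s: "shortest_path ?E u v p"
      have "gdist ?E u v \<le> 2" using gdist_le2[OF Xne Yne uv] .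
      hence "length p \<le> 3" using s unfolding shortest_path_def by auto
      moreover have "walk ?E p" "hd p = u" "last p = v" using s unfolding shortest_path_def by blast+
      moreover have "y \<notin> U" "y \<in> Y" using y unfolding Y'_def by blast+
      ultimately have "p ! 1 = y \<and> (x = hd p \<or> x = last p) \<and> hd p \<in> X \<and> last p \<in> X"
        using key[OF refl assms(3), of p U y x] q(2,3,6) x by simp
      thus ?thesis using \<open>hd p = u\<close> \<open>last p = v\<close> by simp
    next
      assume s: "shortest_path ?E v u p"
      have "gdist ?E v u \<le> 2" using gdist_le2[OF Xne Yne uv(2) uv(1)] .
      hence "length p \<le> 3" using s unfolding shortest_path_def by auto
      moreover have "walk ?E p" "hd p = v" "last p = u" using s unfolding shortest_path_def by blast+
      moreover have "y \<notin> U" "y \<in> Y" using y unfolding Y'_def by blast+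
      ultimately have "p ! 1 = y \<and> (x = hd p \<or> x = last p) \<and> hd p \<in> X \<and> last p \<in> X"
        using key[OF refl assms(3), of p U y x] q(2,3,6) x by simp
      thus ?thesis using \<open>hd p = v\<close> \<open>last p = u\<close> by auto
    qed
    thus ?thesis using q by auto
  qed
  define Q where "Q = {q. q \<subseteq> X \<and> card q = 2}"
  have cardQ: "card Q = n choose 2" unfolding Q_def using n_subsets[OF assms(1), of 2] assms(4) by simp
  have finQ: "finite Q" unfolding Q_def using assms(1) by simp
  have SQ: "g y ` X \<subseteq> Q" if "y \<in> Y'" for y using gprop[OF that] unfolding Q_def by auto
  have disj: "g y ` X \<inter> g y' ` X = {}" if yy: "y \<in> Y'" "y' \<in> Y'" "y \<noteq> y'" for y y'
  proof (rule ccontr)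
    assume "g y ` X \<inter> g y' ` X \<noteq> {}"
    then obtain x x' where xx: "x \<in> X" "x' \<in> X" "g y x = g y' x'" by blast
    obtain p where "P (g y x) = Some p" "p ! 1 = y" using gprop[OF yy(1) xx(1)] by blast
    moreover obtain p' where "P (g y' x') = Some p'" "p' ! 1 = y'" using gprop[OF yy(2) xx(2)] by blast
    ultimately show False using xx(3) yy(3) by auto
  qed
  have finY': "finite Y'" unfolding Y'_def using assms(2) by simp
  have lower: "n + 1 \<le> 2 * card (g y ` X)" if y: "y \<in> Y'" for y
  proof -
    have "X \<subseteq> \<Union> (g y ` X)" using gprop[OF y] by blast
    hence "card X \<le> card (\<Union> (g y ` X))"
      by (rule card_mono[rotated]) (use gprop[OF y] assms(1) in \<open>auto intro: finite_subset\<close>)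
    also have "\<dots> \<le> (\<Sum>q\<in>g y ` X. card q)" by (rule card_Union_le_sum_card)
    also have "\<dots> = (\<Sum>q\<in>g y ` X. 2)" using SQ[OF y] unfolding Q_def
      by (intro sum.cong) auto
    also have "\<dots> = 2 * card (g y ` X)" by simp
    finally have "n \<le> 2 * card (g y ` X)" using assms(4) by simp
    thus ?thesis using assms(8) by presburger
  qed
  have "(\<Sum>y\<in>Y'. card (g y ` X)) = card (\<Union>y\<in>Y'. g y ` X)"
    by (rule card_UN_disjoint[symmetric]) (use finY' assms(1) disj in auto)
  also have "\<dots> \<le> card Q" by (rule card_mono[OF finQ]) (use SQ in auto)
  finally have sumle: "(\<Sum>y\<in>Y'. card (g y ` X)) \<le> n choose 2" using cardQ by simp
  have n1': "n \<ge> 1" using assms(6,7) by simp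
  have "card Y' * (n + 1) \<le> (\<Sum>y\<in>Y'. 2 * card (g y ` X))"
    using sum_mono[of Y' "\<lambda>y. n + 1", OF lower] by simp
  also have "\<dots> = 2 * (\<Sum>y\<in>Y'. card (g y ` X))" by (simp add: sum_distrib_left)
  also have "\<dots> \<le> 2 * (n choose 2)" using sumle by simp
  also have "\<dots> = n * (n - 1)"
  proof -
    have "even (n - 1)" using assms(8) n1' by simp
    hence ev: "even (n * (n - 1))" by simp
    show ?thesis unfolding choose_two using ev by simp
  qed
  finally have main: "card Y' * (n + 1) \<le> n * (n - 1)" .
  have cU: "card U = n + card (U \<inter> Y)"
  proof -
    have "U = X \<union> (U \<inter> Y)" using UV assms(10) by blast
    hence "card U = card X + card (U \<inter> Y)"
      using card_Un_disjoint[of X "U \<inter> Y"] assms(1-3) by auto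
    thus ?thesis using assms(4) by simp
  qed
  have cY': "card Y' + card (U \<inter> Y) = m"
  proof -
    have "Y = Y' \<union> (U \<inter> Y)" "Y' \<inter> (U \<inter> Y) = {}" unfolding Y'_def by auto
    thus ?thesis using card_Un_disjoint[of Y' "U \<inter> Y"] assms(2,5) finY' by (metis finite_Int inf_commute)
  qed
  have n1: "n \<ge> 1" using assms(6,7) by simp
  have R: "real (card Y') * (real n + 1) \<le> real n * (real n - 1)"
    using main n1 by (metis of_nat_1 of_nat_add of_nat_diff of_nat_le_iff of_nat_mult)
  have R2: "real (card U) = real n + real m - real (card Y')" using cU cY' by simp
  have "2 * real n / (real n + 1) = real n - real n * (real n - 1) / (real n + 1)"
    using n1 by (simp add: field_simps)
  also have "\<dots> \<le> real n - real (card Y')"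
    using R n1 by (simp add: field_simps)
  finally show ?thesis using R2 by simp
qed

end
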